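(* Let $A=(A^\bullet,d)$ be a connected, finite-dimensional cdga over $\mathbb{C}$ which has trivial resonance in degree $i$, i.e. $0$ is an isolated point of $\mathcal{R}^i_1(A)$. Then for any finite-dimensional complex Lie algebra $\mathfrak{g}$ and any finite-dimensional representation $\theta\colon\mathfrak{g}\to\mathfrak{gl}(V)$ with $V\ne 0$, the sets $\Pi(A,\theta)$ and $\mathcal{R}^i_1(A,\theta)\cap\mathcal{F}^1(A,\mathfrak{g})$ have the same germ at $0$.
   Context: Connected means $A^0=\mathbb{C}\cdot1$. $\mathcal{F}(A,\mathfrak{g})=\{\omega\in A^1\otimes\mathfrak{g} : d\omega+\tfrac12[\omega,\omega]=0\}$ (for $\omega=\sum_k\eta_k\otimes g_k$: $\sum_k d\eta_k\otimes g_k+\sum_{k<l}\eta_k\eta_l\otimes[g_k,g_l]=0$). For $\omega\in\mathcal{F}(A,\mathfrak{g})$, $d_\omega(a\otimes v)=da\otimes v+\sum_k\eta_ka\otimes\theta(g_k)v$ on $A^\bullet\otimes V$, and $\mathcal{R}^i_r(A,\theta)=\{\omega\in\mathcal{F}(A,\mathfrak{g}):\dim H^i(A\otimes V,d_\omega)\ge r\}$. The rank one version ($\theta=\mathrm{id}_\mathbb{C}$) is denoted $\mathcal{R}^i_r(A)\subseteq\{\eta\in A^1:d\eta=0\}$. $\mathcal{F}^1(A,\mathfrak{g})=\{\eta\otimes g:\eta\in A^1,\ d\eta=0,\ g\in\mathfrak{g}\}$, and $\Pi(A,\theta)=\{\eta\otimes g:d\eta=0,\ \det\theta(g)=0\}$.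 *)

theory Defs
  imports "HOL-Analysis.Analysis"
begin

section \<open>Finite-dimensional cdga over C, in a homogeneous basis\<close>

text \<open>The underlying space of A is complex^'n; the standard basis vector axis j 1
  is homogeneous of degree deg j. So A^p is the span of the basis vectors of degree p.\<close>

definition Agr :: "('n::finite \<Rightarrow> nat) \<Rightarrow> nat \<Rightarrow> (complex^'n) set" where
  "Agr deg p = vec.span {axis j 1 | j. deg j = p}"

definition is_cdga ::
  "('n::finite \<Rightarrow> nat) \<Rightarrow> complex^'n \<Rightarrow> (complex^'n \<Rightarrow> complex^'n \<Rightarrow> complex^'n)
    \<Rightarrow> (complex^'n \<Rightarrow> complex^'n) \<Rightarrow> bool" where
  "is_cdga deg one mul d \<longleftrightarrow>
     (\<forall>a. Vector_Spaces.linear (*s) (*s) (mul a)) \<and>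
     (\<forall>b. Vector_Spaces.linear (*s) (*s) (\<lambda>a. mul a b)) \<and>
     (\<forall>a b c. mul (mul a b) c = mul a (mul b c)) \<and>
     (\<forall>a. mul one a = a \<and> mul a one = a) \<and>
     one \<in> Agr deg 0 \<and>
     (\<forall>p q a b. a \<in> Agr deg p \<longrightarrow> b \<in> Agr deg q \<longrightarrow>
        mul a b \<in> Agr deg (p + q) \<and> mul a b = ((-1) ^ (p * q)) *s mul b a) \<and>
     Vector_Spaces.linear (*s) (*s) d \<and>
     (\<forall>p a. a \<in> Agr deg p \<longrightarrow> d a \<in> Agr deg (Suc p)) \<and>
     (\<forall>a. d (d a) = 0) \<and>
     (\<forall>p a b. a \<in> Agr deg p \<longrightarrow>
        d (mul a b) = mul (d a) b + ((-1) ^ p) *s mul a (d b))"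

text \<open>Connected: A^0 = C \<cdot> 1 (a line).\<close>
definition connected_cdga ::
  "('n::finite \<Rightarrow> nat) \<Rightarrow> complex^'n \<Rightarrow> bool" where
  "connected_cdga deg one \<longleftrightarrow> one \<noteq> 0 \<and> Agr deg 0 = vec.span {one}"

section \<open>Rank one resonance varieties R^i_r(A)\<close>

definition cohdim_gen :: "('x::finite \<Rightarrow> nat) \<Rightarrow> (complex^'x \<Rightarrow> complex^'x) \<Rightarrow> nat \<Rightarrow> nat" where
  "cohdim_gen dg D i =
     (let C = (\<lambda>p. {x :: complex^'x. \<forall>k. dg k \<noteq> p \<longrightarrow> x $ k = 0});
          Z = {x \<in> C i. D x = 0};
          B = (if i = 0 then {0} else D ` C (i - 1))
      in vec.dim Z - vec.dim B)"

definition twisted1 :: "(complex^'n \<Rightarrow> complex^'n \<Rightarrow> complex^'n) \<Rightarrow> (complex^'n \<Rightarrow> complex^'n)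
    \<Rightarrow> complex^'n \<Rightarrow> complex^'n \<Rightarrow> complex^'n" where
  "twisted1 mul d \<eta> a = d a + mul \<eta> a"

definition res1 :: "('n::finite \<Rightarrow> nat) \<Rightarrow> (complex^'n \<Rightarrow> complex^'n \<Rightarrow> complex^'n)
    \<Rightarrow> (complex^'n \<Rightarrow> complex^'n) \<Rightarrow> nat \<Rightarrow> nat \<Rightarrow> (complex^'n) set" where
  "res1 deg mul d i r =
     {\<eta> \<in> Agr deg 1. d \<eta> = 0 \<and> cohdim_gen deg (twisted1 mul d \<eta>) i \<ge> r}"

section \<open>Lie algebras and representations\<close>

text \<open>A finite-dimensional complex Lie algebra g is given as a subspace L of complex^'r
  with bracket br; a representation on V = complex^'m is a map theta into m x m matrices.\<close>

definition is_lie_algebra :: "(complex^'r::finite) set \<Rightarrow> (complex^'r \<Rightarrow> complex^'r \<Rightarrow> complex^'r) \<Rightarrow> bool" where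
  "is_lie_algebra L br \<longleftrightarrow> vec.subspace L \<and>
     (\<forall>x\<in>L. \<forall>y\<in>L. br x y \<in> L) \<and>
     (\<forall>x\<in>L. \<forall>y\<in>L. \<forall>z\<in>L. br (x + y) z = br x z + br y z \<and> br x (y + z) = br x y + br x z) \<and>
     (\<forall>c. \<forall>x\<in>L. \<forall>y\<in>L. br (c *s x) y = c *s br x y \<and> br x (c *s y) = c *s br x y) \<and>
     (\<forall>x\<in>L. br x x = 0) \<and>
     (\<forall>x\<in>L. \<forall>y\<in>L. \<forall>z\<in>L. br x (br y z) + br y (br z x) + br z (br x y) = 0)"

definition mscale :: "complex \<Rightarrow> complex^'m^'m \<Rightarrow> complex^'m^'m" where
  "mscale c M = (\<chi> a b. c * M $ a $ b)"

definition is_lie_rep :: "(complex^'r::finite) set \<Rightarrow> (complex^'r \<Rightarrow> complex^'r \<Rightarrow> complex^'r)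
    \<Rightarrow> (complex^'r \<Rightarrow> complex^'m::finite^'m) \<Rightarrow> bool" where
  "is_lie_rep L br \<theta> \<longleftrightarrow>
     (\<forall>x\<in>L. \<forall>y\<in>L. \<theta> (x + y) = \<theta> x + \<theta> y) \<and>
     (\<forall>c. \<forall>x\<in>L. \<theta> (c *s x) = mscale c (\<theta> x)) \<and>
     (\<forall>x\<in>L. \<forall>y\<in>L. \<theta> (br x y) = \<theta> x ** \<theta> y - \<theta> y ** \<theta> x)"

section \<open>Tensor products A \<otimes> W, W = complex^'w, as complex^('n \<times> 'w)\<close>

definition tens :: "complex^'n::finite \<Rightarrow> complex^'w::finite \<Rightarrow> complex^('n \<times> 'w)" where
  "tens a v = (\<chi> p. a $ fst p * v $ snd p)"

definition slice :: "complex^('n::finite \<times> 'w::finite) \<Rightarrow> 'n \<Rightarrow> complex^'w" where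
  "slice x j = (\<chi> k. x $ (j, k))"

text \<open>Every x equals the sum over j of (e_j \<otimes> slice x j).  A^1 \<otimes> g:\<close>

definition A1g :: "('n::finite \<Rightarrow> nat) \<Rightarrow> (complex^'r::finite) set \<Rightarrow> (complex^('n \<times> 'r)) set" where
  "A1g deg L = {w. \<forall>j. slice w j \<in> L \<and> (deg j \<noteq> 1 \<longrightarrow> slice w j = 0)}"

text \<open>Flat connections: d\<omega> + 1/2 [\<omega>,\<omega>] = 0, for \<omega> = sum_j e_j \<otimes> w_j.\<close>
definition flat :: "('n::finite \<Rightarrow> nat) \<Rightarrow> (complex^'n \<Rightarrow> complex^'n \<Rightarrow> complex^'n)
    \<Rightarrow> (complex^'n \<Rightarrow> complex^'n) \<Rightarrow> (complex^'r::finite) set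
    \<Rightarrow> (complex^'r \<Rightarrow> complex^'r \<Rightarrow> complex^'r) \<Rightarrow> (complex^('n \<times> 'r)) set" where
  "flat deg mul d L br =
     {w \<in> A1g deg L.
        (\<Sum>j\<in>UNIV. tens (d (axis j 1)) (slice w j))
        + (\<Sum>j\<in>UNIV. \<Sum>l\<in>UNIV. tens (mul (axis j 1) (axis l 1))
                                     ((1/2) *s br (slice w j) (slice w l))) = 0}"

text \<open>d_\<omega>(a \<otimes> v) = da \<otimes> v + sum_k \<eta>_k a \<otimes> \<theta>(g_k) v on A \<otimes> V.\<close>
definition twisted :: "(complex^'n::finite \<Rightarrow> complex^'n \<Rightarrow> complex^'n) \<Rightarrow> (complex^'n \<Rightarrow> complex^'n)
    \<Rightarrow> (complex^'r::finite \<Rightarrow> complex^'m::finite^'m) \<Rightarrow> complex^('n \<times> 'r)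
    \<Rightarrow> complex^('n \<times> 'm) \<Rightarrow> complex^('n \<times> 'm)" where
  "twisted mul d \<theta> w x =
     (\<Sum>l\<in>UNIV. tens (d (axis l 1)) (slice x l))
     + (\<Sum>j\<in>UNIV. \<Sum>l\<in>UNIV. tens (mul (axis j 1) (axis l 1)) (\<theta> (slice w j) *v slice x l))"

definition res :: "('n::finite \<Rightarrow> nat) \<Rightarrow> (complex^'n \<Rightarrow> complex^'n \<Rightarrow> complex^'n)
    \<Rightarrow> (complex^'n \<Rightarrow> complex^'n) \<Rightarrow> (complex^'r::finite) set
    \<Rightarrow> (complex^'r \<Rightarrow> complex^'r \<Rightarrow> complex^'r) \<Rightarrow> (complex^'r \<Rightarrow> complex^'m::finite^'m)
    \<Rightarrow> nat \<Rightarrow> nat \<Rightarrow> (complex^('n \<times> 'r)) set" where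
  "res deg mul d L br \<theta> i r =
     {w \<in> flat deg mul d L br. cohdim_gen (\<lambda>(j::'n, a::'m). deg j) (twisted mul d \<theta> w) i \<ge> r}"

definition flat1 :: "('n::finite \<Rightarrow> nat) \<Rightarrow> (complex^'n \<Rightarrow> complex^'n) \<Rightarrow> (complex^'r::finite) set
    \<Rightarrow> (complex^('n \<times> 'r)) set" where
  "flat1 deg d L = {tens \<eta> g | \<eta> g. \<eta> \<in> Agr deg 1 \<and> d \<eta> = 0 \<and> g \<in> L}"

definition Pi_set :: "('n::finite \<Rightarrow> nat) \<Rightarrow> (complex^'n \<Rightarrow> complex^'n) \<Rightarrow> (complex^'r::finite) set
    \<Rightarrow> (complex^'r \<Rightarrow> complex^'m::finite^'m) \<Rightarrow> (complex^('n \<times> 'r)) set" where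
  "Pi_set deg d L \<theta> = {tens \<eta> g | \<eta> g. \<eta> \<in> Agr deg 1 \<and> d \<eta> = 0 \<and> g \<in> L \<and> det (\<theta> g) = 0}"

text \<open>Two sets have the same germ at 0.\<close>
definition same_germ0 :: "('a::real_normed_vector) set \<Rightarrow> 'a set \<Rightarrow> bool" where
  "same_germ0 S T \<longleftrightarrow> (\<exists>e>0. S \<inter> ball 0 e = T \<inter> ball 0 e)"

end

theory Submission imports Defs "HOL-Computational_Algebra.Fundamental_Theorem_Algebra" begin

definition Cs :: "('x::finite \<Rightarrow> nat) \<Rightarrow> nat \<Rightarrow> (complex^'x) set" where
  "Cs dg p = {x. \<forall>k. dg k \<noteq> p \<longrightarrow> x $ k = 0}"

definition exact_at :: "('x::finite \<Rightarrow> nat) \<Rightarrow> (complex^'x \<Rightarrow> complex^'x) \<Rightarrow> nat \<Rightarrow> bool" where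
  "exact_at dg D i \<longleftrightarrow> (\<forall>z\<in>Cs dg i. D z = 0 \<longrightarrow>
      (if i = 0 then z = 0 else (\<exists>y\<in>Cs dg (i - 1). D y = z)))"

lemma subspace_Cs: "vec.subspace (Cs dg p)"
  unfolding vec.subspace_def Cs_def by auto

lemma cohdim_unfold: "cohdim_gen dg D i =
   vec.dim {x \<in> Cs dg i. D x = 0} - vec.dim (if i = 0 then {0} else D ` Cs dg (i - 1))"
  by (simp add: cohdim_gen_def Cs_def Let_def)

lemma exact_cohdim0:
  assumes lin: "Vector_Spaces.linear (*s) (*s) D" and ex: "exact_at dg D i"
  shows "cohdim_gen dg D i = 0"
proof -
  have "{x \<in> Cs dg i. D x = 0} \<subseteq> (if i = 0 then {0} else D ` Cs dg (i - 1))"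
    using ex unfolding exact_at_def by (auto split: if_splits)
  then have "vec.dim {x \<in> Cs dg i. D x = 0} \<le> vec.dim (if i = 0 then {0} else D ` Cs dg (i - 1))"
    by (rule vec.dim_subset)
  then show ?thesis unfolding cohdim_unfold by simp
qed

lemma cohdim0_exact:
  assumes lin: "Vector_Spaces.linear (*s) (*s) D"
    and deg: "\<And>y. 0 < i \<Longrightarrow> y \<in> Cs dg (i - 1) \<Longrightarrow> D y \<in> Cs dg i"
    and sq: "\<And>x. D (D x) = 0"
    and c0: "cohdim_gen dg D i = 0"
  shows "exact_at dg D i"
proof -
  let ?Z = "{x \<in> Cs dg i. D x = 0}"
  let ?B = "(if i = 0 then {0} else D ` Cs dg (i - 1))"
  have D0: "D 0 = 0" using vec.linear_0[OF lin] .
  have BZ: "?B \<subseteq> ?Z"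
    using deg sq D0 subspace_Cs[of dg i] vec.subspace_0 by (auto)
  have Zs: "vec.subspace ?Z"
  proof -
    have "?Z = Cs dg i \<inter> {x. D x = 0}" by auto
    then show ?thesis using vec.subspace_inter[OF subspace_Cs vec.linear_subspace_kernel[OF lin]]
      by simp
  qed
  have Bs: "vec.subspace ?B"
    using vec.subspace_0 vec.linear_subspace_image[OF lin subspace_Cs] by auto
  have "vec.dim ?Z \<le> vec.dim ?B" using c0 unfolding cohdim_unfold by simp
  then have "?B = ?Z" using vec.subspace_dim_equal[OF Bs Zs BZ] by simp
  then show ?thesis unfolding exact_at_def
    by (auto split: if_splits) (metis (mono_tags, lifting) imageE mem_Collect_eq)
qed

section \<open>Tensors\<close>

definition colA :: "complex^('n::finite \<times> 'm::finite) \<Rightarrow> 'm \<Rightarrow> complex^'n" where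
  "colA x a = (\<chi> l. x $ (l, a))"

definition ip :: "complex^'m::finite \<Rightarrow> complex^'m \<Rightarrow> complex" where
  "ip u w = (\<Sum>a\<in>UNIV. u $ a * w $ a)"

definition piu :: "complex^'m::finite \<Rightarrow> complex^('n::finite \<times> 'm) \<Rightarrow> complex^'n" where
  "piu u x = (\<chi> j. ip u (slice x j))"

definition Dop :: "(complex^'n::finite \<Rightarrow> complex^'n \<Rightarrow> complex^'n) \<Rightarrow> (complex^'n \<Rightarrow> complex^'n)
    \<Rightarrow> complex^'n \<Rightarrow> complex^'m::finite^'m \<Rightarrow> complex^('n \<times> 'm) \<Rightarrow> complex^('n \<times> 'm)" where
  "Dop mul d \<eta> T x = (\<Sum>l\<in>UNIV. tens (d (axis l 1)) (slice x l))
      + (\<Sum>l\<in>UNIV. tens (mul \<eta> (axis l 1)) (T *v slice x l))"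

lemma tens_nth[simp]: "tens a v $ (j, b) = a $ j * v $ b"
  by (simp add: tens_def)

lemma slice_nth[simp]: "slice x j $ k = x $ (j, k)"
  by (simp add: slice_def)

lemma colA_nth[simp]: "colA x a $ l = x $ (l, a)"
  by (simp add: colA_def)

lemma piu_nth: "piu u x $ j = (\<Sum>a\<in>UNIV. u $ a * x $ (j, a))"
  by (simp add: piu_def ip_def)

lemma vec_eq_pair: "(x::'a^('n::finite \<times> 'm::finite)) = y \<longleftrightarrow> (\<forall>j a. x $ (j, a) = y $ (j, a))"
  by (auto simp: vec_eq_iff)

lemma lin_comp: "Vector_Spaces.linear (*s) (*s) f \<Longrightarrow>
   (f x) $ j = (\<Sum>i\<in>UNIV. x $ i * (f (axis i 1) $ j))"
  by (rule linear_componentwise)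

lemma Dop_nth: "Dop mul d \<eta> T x $ (j, a) =
   (\<Sum>l\<in>UNIV. d (axis l 1) $ j * x $ (l, a))
   + (\<Sum>l\<in>UNIV. mul \<eta> (axis l 1) $ j * (\<Sum>b\<in>UNIV. T $ a $ b * x $ (l, b)))"
  by (simp add: Dop_def sum_component matrix_vector_mult_def)

lemma Dop_add: "Dop mul d \<eta> T (x + y) = Dop mul d \<eta> T x + Dop mul d \<eta> T y"
  by (simp add: vec_eq_pair Dop_nth algebra_simps sum.distrib)

lemma Dop_scale: "Dop mul d \<eta> T (c *s x) = c *s Dop mul d \<eta> T x"
  by (simp add: vec_eq_pair Dop_nth algebra_simps sum.distrib sum_distrib_left)

lemma Dop_linear: "Vector_Spaces.linear (*s) (*s) (Dop mul d \<eta> T)"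
  unfolding Vector_Spaces.linear_iff using vec.vector_space_axioms by (simp add: Dop_add Dop_scale)

lemma Dop_0: "Dop mul d \<eta> T 0 = 0"
  using vec.linear_0[OF Dop_linear] .

lemma Dop_sum: "Dop mul d \<eta> T (\<Sum>k\<in>S. f k) = (\<Sum>k\<in>S. Dop mul d \<eta> T (f k))"
  by (rule vec.linear_sum[OF Dop_linear])

lemma Dop_diff: "Dop mul d \<eta> T (x - y) = Dop mul d \<eta> T x - Dop mul d \<eta> T y"
  using vec.linear_diff[OF Dop_linear] .

lemma decomp: "x = (\<Sum>a\<in>UNIV. tens (colA x a) (axis a 1))"
  unfolding vec_eq_pair
proof (intro allI)
  fix j a
  have "(\<Sum>b\<in>UNIV. tens (colA x b) (axis b 1)) $ (j, a) = (\<Sum>b\<in>UNIV. if b = a then x $ (j, b) else 0)"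
    unfolding sum_component by (rule sum.cong) (auto simp: axis_def)
  then show "x $ (j, a) = (\<Sum>b\<in>UNIV. tens (colA x b) (axis b 1)) $ (j, a)" by simp
qed

lemma Dop_tens:
  assumes ld: "Vector_Spaces.linear (*s) (*s) d" and lm: "Vector_Spaces.linear (*s) (*s) (mul \<eta>)"
  shows "Dop mul d \<eta> T (tens c w) = tens (d c) w + tens (mul \<eta> c) (T *v w)"
proof -
  have "\<And>j a. Dop mul d \<eta> T (tens c w) $ (j, a) = (tens (d c) w + tens (mul \<eta> c) (T *v w)) $ (j, a)"
    by (simp add: Dop_nth lin_comp[OF ld, of c] lin_comp[OF lm, of c] matrix_vector_mult_def
        sum_distrib_left sum_distrib_right algebra_simps)
  then show ?thesis by (simp add: vec_eq_pair)
qed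


lemma eig_in_subspace:
  fixes T :: "complex^'m::finite^'m"
  assumes W: "vec.subspace W" and inv: "\<And>x. x \<in> W \<Longrightarrow> T *v x \<in> W"
    and x0W: "x0 \<in> W" and x0: "x0 \<noteq> 0"
  shows "\<exists>r y. y \<in> W \<and> y \<noteq> 0 \<and> T *v y = r *s y"
proof -
  define Tp where "Tp j = (((*v) T) ^^ j) x0" for j
  have Tp0: "Tp 0 = x0" by (simp add: Tp_def)
  have TpS: "Tp (Suc j) = T *v Tp j" for j by (simp add: Tp_def)
  have TpW: "Tp j \<in> W" for j by (induct j) (auto simp: Tp0 TpS x0W inv)
  define P where "P k \<longleftrightarrow> Tp k \<in> vec.span (Tp ` {..<k})" for k
  have exP: "\<exists>k. P k"
  proof (rule ccontr)
    assume H: "\<not> (\<exists>k. P k)"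
    have ind: "vec.independent (Tp ` {..<k}) \<and> card (Tp ` {..<k}) = k" for k
    proof (induct k)
      case 0 then show ?case by (simp add: vec.independent_empty)
    next
      case (Suc k)
      have ns: "Tp k \<notin> vec.span (Tp ` {..<k})" using H by (auto simp: P_def)
      then have ni: "Tp k \<notin> Tp ` {..<k}" by (metis vec.span_base)
      have e: "Tp ` {..<Suc k} = insert (Tp k) (Tp ` {..<k})" by (auto simp: lessThan_Suc)
      have "vec.independent (insert (Tp k) (Tp ` {..<k}))"
        by (rule vec.independent_insertI[OF ns]) (use Suc in blast)
      moreover have "card (insert (Tp k) (Tp ` {..<k})) = Suc k"
        using Suc ni by (simp add: card_insert_disjoint)
      ultimately show ?case unfolding e by blast
    qed
    let ?k = "Suc CARD('m)"
    have "card (Tp ` {..<?k}) \<le> vec.dim (Tp ` {..<?k})"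
      using vec.independent_bound_general[of "Tp ` {..<?k}"] ind[of ?k] by blast
    also have "\<dots> \<le> vec.dim (UNIV :: (complex^'m) set)" by (rule vec.dim_subset) simp
    also have "\<dots> = CARD('m)" by (simp add: card_cart_basis)
    finally have "card (Tp ` {..<?k}) \<le> CARD('m)" .
    then show False using ind[of ?k] by linarith
  qed
  define k where "k = (LEAST k. P k)"
  have Pk: "P k" unfolding k_def by (rule LeastI_ex[OF exP])
  have nP: "j < k \<Longrightarrow> \<not> P j" for j unfolding k_def by (rule not_less_Least)
  have k0: "k \<noteq> 0"
  proof
    assume "k = 0" then have "x0 \<in> vec.span {}" using Pk by (simp add: P_def Tp0)
    then show False using x0 by simp
  qed
  then obtain k' where kk: "k = Suc k'" by (cases k) auto
  have injTp: "inj_on Tp {..<k}"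
  proof (rule inj_onI)
    fix a b assume a: "a \<in> {..<k}" and b: "b \<in> {..<k}" and e: "Tp a = Tp b"
    show "a = b"
    proof (rule ccontr)
      assume "a \<noteq> b"
      then consider "a < b" | "b < a" by arith
      then show False
      proof cases
        case 1
        then have "Tp b \<in> vec.span (Tp ` {..<b})" using e[symmetric] by (auto intro: vec.span_base)
        then show False using nP[of b] b by (auto simp: P_def)
      next
        case 2
        then have "Tp a \<in> vec.span (Tp ` {..<a})" using e by (auto intro: vec.span_base)
        then show False using nP[of a] a by (auto simp: P_def)
      qed
    qed
  qed
  obtain cf where cf: "Tp k = (\<Sum>v\<in>Tp ` {..<k}. cf v *s v)"
    using Pk unfolding P_def vec.span_finite[OF finite_imageI[OF finite_lessThan]] by auto
  define c where "c j = cf (Tp j)" for j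
  have cTp: "Tp k = (\<Sum>j<k. c j *s Tp j)"
    using cf unfolding c_def by (simp add: sum.reindex[OF injTp])
  \<comment> \<open>polynomial evaluation\<close>
  define E where "E N f = (\<Sum>j<N. coeff f j *s Tp j)" for N and f :: "complex poly"
  have E_add: "E N (f + g) = E N f + E N g" for N f g
    by (simp add: E_def sum.distrib algebra_simps vec.scale_left_distrib)
  have E_smult: "E N (smult a f) = a *s E N f" for N a f
    by (simp add: E_def vec.scale_sum_right)
  have E_pCons: "E (Suc N) (pCons 0 f) = T *v E N f" for N f
    unfolding E_def sum.lessThan_Suc_shift by (simp add: TpS vec.linear_sum[OF matrix_vector_mul_linear_gen]
        vec.linear_scale[OF matrix_vector_mul_linear_gen])
  have E_Suc: "E (Suc N) f = E N f + coeff f N *s Tp N" for N f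
    by (simp add: E_def)
  define p :: "complex poly" where "p = monom 1 k - (\<Sum>j<k. monom (c j) j)"
  have coeff_p: "coeff p j = (if j = k then 1 else 0) - (if j < k then c j else 0)" for j
  proof -
    have "coeff (\<Sum>i<k. monom (c i) i) j = (\<Sum>i<k. if i = j then c i else 0)"
      by (simp add: coeff_sum coeff_monom)
    also have "\<dots> = (if j < k then c j else 0)" by simp
    finally show ?thesis by (simp add: p_def coeff_monom)
  qed
  have Ep: "E (Suc k) p = 0"
  proof -
    have "E (Suc k) p = (\<Sum>j<k. coeff p j *s Tp j) + Tp k"
      by (simp add: E_def coeff_p)
    also have "(\<Sum>j<k. coeff p j *s Tp j) = (\<Sum>j<k. (- c j) *s Tp j)"
      by (rule sum.cong) (auto simp: coeff_p)
    also have "\<dots> = - (\<Sum>j<k. c j *s Tp j)"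
      by (simp add: sum_negf[symmetric])
    finally show ?thesis using cTp by simp
  qed
  have degp: "degree p = k"
  proof (rule antisym)
    show "degree p \<le> k" by (rule degree_le) (auto simp: coeff_p)
    show "k \<le> degree p" by (rule le_degree) (simp add: coeff_p)
  qed
  have "\<not> constant (poly p)" unfolding constant_degree degp using k0 by simp
  then obtain r where r: "poly p r = 0" using fundamental_theorem_of_algebra by blast
  then have "[:-r, 1:] dvd p" by (simp only: poly_eq_0_iff_dvd)
  then obtain q where pq: "p = [:-r, 1:] * q" by (rule dvdE)
  have pq': "p = smult (-r) q + pCons 0 q" using pq by (simp add: mult_pCons_left)
  have qne: "q \<noteq> 0" using pq degp k0 by auto
  have "degree p = degree [:-r, 1:] + degree q" unfolding pq by (rule degree_mult_eq) (simp_all add: qne)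
  then have degq: "degree q = k'" using degp kk by simp
  have qk: "coeff q k = 0" using degq kk by (simp add: coeff_eq_0)
  have qk': "coeff q k' = 1"
  proof -
    have "coeff p k = 1" by (simp add: coeff_p)
    then show ?thesis using qk unfolding pq' kk by simp
  qed
  define y where "y = E k q"
  have "E (Suc k) p = T *v y - r *s y"
    unfolding pq' E_add E_smult E_pCons E_Suc[of k q] qk y_def by (simp add: algebra_simps)
  then have Ty: "T *v y = r *s y" using Ep by simp
  have yW: "y \<in> W" unfolding y_def E_def
    by (intro vec.subspace_sum[OF W] vec.subspace_scale[OF W] TpW)
  have yne: "y \<noteq> 0"
  proof
    assume "y = 0"
    then have "Tp k' = - E k' q" unfolding y_def kk E_Suc qk' by (simp add: algebra_simps eq_neg_iff_add_eq_0)
    also have "\<dots> \<in> vec.span (Tp ` {..<k'})" unfolding E_def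
      by (intro vec.span_neg vec.span_sum vec.span_scale vec.span_base) auto
    finally show False using nP[of k'] kk by (auto simp: P_def)
  qed
  show ?thesis using yW yne Ty by blast
qed


lemma functional_exists:
  fixes S :: "(complex^'m::finite) set"
  assumes S: "vec.subspace S" and w0: "w0 \<notin> S"
  shows "\<exists>u. ip u w0 = 1 \<and> (\<forall>s\<in>S. ip u s = 0)"
proof -
  obtain B where B: "B \<subseteq> S" "vec.independent B" "S \<subseteq> vec.span B" "card B = vec.dim S"
    by (rule vec.basis_exists)
  have spB: "vec.span B \<subseteq> S" using B(1) S by (rule vec.span_minimal)
  have "w0 \<notin> vec.span B" using spB w0 by blast
  then have ind: "vec.independent (insert w0 B)" using B(2) by (rule vec.independent_insertI)
  interpret vp: vector_space_pair "(*s) :: complex \<Rightarrow> complex^'m \<Rightarrow> complex^'m"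
    "(*) :: complex \<Rightarrow> complex \<Rightarrow> complex" by unfold_locales
  obtain g where g: "Vector_Spaces.linear ((*s) :: complex \<Rightarrow> complex^'m \<Rightarrow> complex^'m) (*) g"
    and gv: "\<forall>x\<in>insert w0 B. g x = (if x = w0 then 1 else 0)"
    using vp.linear_independent_extend[OF ind, of "\<lambda>x. if x = w0 then 1 else 0"] by blast
  interpret g: Vector_Spaces.linear "(*s) :: complex \<Rightarrow> complex^'m \<Rightarrow> complex^'m" "(*)" g
    by (rule g)
  define u :: "complex^'m" where "u = (\<chi> a. g (axis a 1))"
  have gu: "g x = ip u x" for x
  proof -
    have "g x = g (\<Sum>a\<in>UNIV. x $ a *s axis a 1)" by (simp add: basis_expansion)
    also have "\<dots> = (\<Sum>a\<in>UNIV. x $ a * g (axis a 1))" by (simp add: g.sum g.scale)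
    finally show ?thesis by (simp add: ip_def u_def mult.commute)
  qed
  have g0: "g s = 0" if "s \<in> S" for s
  proof -
    have "s \<in> vec.span B" using that B(3) by blast
    moreover have "g b = 0" if "b \<in> B" for b
    proof -
      have "b \<noteq> w0" using that B(1) w0 by blast
      then show ?thesis using gv that by auto
    qed
    ultimately show ?thesis using vp.linear_eq_0_on_span[OF g] by blast
  qed
  show ?thesis using gv g0 gu by (intro exI[of _ u]) auto
qed

lemma mat_mult_vec: "(mat r :: 'a::comm_ring_1^'m::finite^'m) *v x = r *s x"
proof -
  have "(mat r *v x) $ i = r * x $ i" for i
  proof -
    have "(mat r *v x) $ i = (\<Sum>j\<in>UNIV. mat r $ i $ j * x $ j)"
      by (simp add: matrix_vector_mult_def)
    also have "\<dots> = (\<Sum>j\<in>UNIV. if j = i then r * x $ i else 0)"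
      by (rule sum.cong) (auto simp: mat_def)
    finally have "(mat r *v x) $ i = (\<Sum>j\<in>UNIV. if j = i then r * x $ i else 0)" .
    then show ?thesis by simp
  qed
  then show ?thesis by (simp add: vec_eq_iff)
qed

lemma hyperplane:
  fixes T :: "complex^'m::finite^'m"
  assumes W: "vec.subspace W" and inv: "\<And>x. x \<in> W \<Longrightarrow> T *v x \<in> W"
    and yW: "y \<in> W" and y: "y \<noteq> 0" and Ty: "T *v y = r *s y"
  shows "\<exists>u w0. w0 \<in> W \<and> ip u w0 = 1 \<and> (\<forall>s\<in>W. ip u (T *v s) = r * ip u s)"
proof -
  define M where "M = T - mat r"
  have Mx: "M *v x = T *v x - r *s x" for x
    by (simp add: M_def matrix_vector_mult_diff_rdistrib mat_mult_vec)
  have My: "M *v y = 0" using Ty by (simp add: Mx)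
  let ?S = "(*v) M ` W"
  have Ssub: "vec.subspace ?S" by (rule vec.subspace_image[OF W])
  have "\<exists>w0\<in>W. w0 \<notin> ?S"
  proof (rule ccontr)
    assume "\<not> ?thesis"
    then have WS: "W \<subseteq> ?S" by blast
    have iy: "vec.independent {y}"
      using vec.independent_insertI[of y "{}"] y by (simp add: vec.independent_empty)
    obtain B where B: "{y} \<subseteq> B" "B \<subseteq> W" "vec.independent B" "W \<subseteq> vec.span B"
      using vec.maximal_independent_subset_extend[of "{y}" W] yW iy by auto
    have fB: "finite B" using B(3) vec.independent_bound_general by blast
    have dW: "vec.dim W = card B" by (rule vec.dim_unique[OF B(2) B(4) B(3) refl])
    have "?S \<subseteq> (*v) M ` vec.span B" using B(4) by blast
    also have "\<dots> = vec.span ((*v) M ` B)" by (simp add: vec.span_image)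
    also have "(*v) M ` B \<subseteq> insert 0 ((*v) M ` (B - {y}))" using My by auto
    then have "vec.span ((*v) M ` B) \<subseteq> vec.span ((*v) M ` (B - {y}))"
      using vec.span_mono[of "(*v) M ` B" "insert 0 ((*v) M ` (B - {y}))"]
      by (simp add: vec.span_insert_0)
    finally have "W \<subseteq> vec.span ((*v) M ` (B - {y}))" using WS by blast
    then have "vec.dim W \<le> card ((*v) M ` (B - {y}))"
      by (rule vec.dim_le_card) (use fB in simp)
    also have "\<dots> \<le> card (B - {y})" by (rule card_image_le) (use fB in simp)
    also have "\<dots> < card B" using card_Diff1_less[OF fB, of y] B(1) by auto
    finally show False using dW by simp
  qed
  then obtain w0 where w0W: "w0 \<in> W" and w0S: "w0 \<notin> ?S" by blast
  obtain u where u1: "ip u w0 = 1" and u0: "\<forall>s\<in>?S. ip u s = 0"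
    using functional_exists[OF Ssub w0S] by blast
  have ip_add: "ip u (a + b) = ip u a + ip u b" for a b
    by (simp add: ip_def algebra_simps sum.distrib)
  have ip_scale: "ip u (c *s b) = c * ip u b" for c b
    by (simp add: ip_def algebra_simps sum_distrib_left)
  have "ip u (T *v s) = r * ip u s" if "s \<in> W" for s
  proof -
    have "T *v s = M *v s + r *s s" by (simp add: Mx)
    then have "ip u (T *v s) = ip u (M *v s) + r * ip u s" by (simp add: ip_add ip_scale)
    moreover have "ip u (M *v s) = 0" using u0 that by blast
    ultimately show ?thesis by simp
  qed
  then show ?thesis using w0W u1 by blast
qed


lemma norm_tens: "norm (tens (a::complex^'n::finite) (v::complex^'m::finite)) = norm a * norm v"
proof -
  have "(\<Sum>p\<in>UNIV. (norm (tens a v $ p))\<^sup>2) = (\<Sum>j\<in>UNIV. (norm (a $ j))\<^sup>2) * (\<Sum>b\<in>UNIV. (norm (v $ b))\<^sup>2)"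
  proof -
    have U: "(UNIV::('n \<times> 'm) set) = UNIV \<times> UNIV" by simp
    have "(\<Sum>p\<in>UNIV. (norm (tens a v $ p))\<^sup>2) = (\<Sum>(j,b)\<in>UNIV \<times> UNIV. (norm (a $ j))\<^sup>2 * (norm (v $ b))\<^sup>2)"
      unfolding U by (rule sum.cong) (auto simp: norm_mult power_mult_distrib tens_def)
    also have "\<dots> = (\<Sum>j\<in>UNIV. \<Sum>b\<in>UNIV. (norm (a $ j))\<^sup>2 * (norm (v $ b))\<^sup>2)"
      by (rule sum.cartesian_product[symmetric])
    also have "\<dots> = (\<Sum>j\<in>UNIV. (norm (a $ j))\<^sup>2) * (\<Sum>b\<in>UNIV. (norm (v $ b))\<^sup>2)"
      by (simp add: sum_product)
    finally show ?thesis .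
  qed
  then show ?thesis by (simp add: norm_vec_def L2_set_def real_sqrt_mult)
qed

lemma norm_scale_vec: "norm (r *s (x::complex^'n::finite)) = norm r * norm x"
proof -
  have "(\<Sum>j\<in>UNIV. (norm ((r *s x) $ j))\<^sup>2) = (norm r)\<^sup>2 * (\<Sum>j\<in>UNIV. (norm (x $ j))\<^sup>2)"
    by (simp add: norm_mult power_mult_distrib sum_distrib_left)
  then show ?thesis by (simp add: norm_vec_def L2_set_def real_sqrt_mult)
qed

lemma lin_on_bound:
  fixes f :: "complex^'r::finite \<Rightarrow> complex"
  assumes L: "vec.subspace L"
    and fadd: "\<And>x y. x \<in> L \<Longrightarrow> y \<in> L \<Longrightarrow> f (x + y) = f x + f y"
    and fscale: "\<And>c x. x \<in> L \<Longrightarrow> f (c *s x) = c * f x"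
  shows "\<exists>K\<ge>0. \<forall>x\<in>L. norm (f x) \<le> K * norm x"
proof -
  obtain B where B: "B \<subseteq> L" "vec.independent B" "L \<subseteq> vec.span B" "card B = vec.dim L"
    by (rule vec.basis_exists)
  interpret vp: vector_space_pair "(*s) :: complex \<Rightarrow> complex^'r \<Rightarrow> complex^'r"
    "(*) :: complex \<Rightarrow> complex \<Rightarrow> complex" by unfold_locales
  obtain h where h: "Vector_Spaces.linear ((*s) :: complex \<Rightarrow> complex^'r \<Rightarrow> complex^'r) (*) h"
    and hB: "\<forall>x\<in>B. h x = f x"
    using vp.linear_independent_extend[OF B(2), of f] by blast
  interpret h: Vector_Spaces.linear "(*s) :: complex \<Rightarrow> complex^'r \<Rightarrow> complex^'r" "(*)" h
    by (rule h)
  have f0: "f 0 = 0" using fadd[of 0 0] vec.subspace_0[OF L] by simp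
  let ?P = "{x \<in> L. h x = f x}"
  have Ps: "vec.subspace ?P"
    unfolding vec.subspace_def using L f0 fadd fscale
    by (auto simp: h.add h.scale h.zero vec.subspace_def)
  have "vec.span B \<subseteq> ?P" by (rule vec.span_minimal) (use B(1) hB in auto, rule Ps)
  then have hf: "h x = f x" if "x \<in> L" for x using that B(3) by blast
  define K where "K = (\<Sum>k\<in>UNIV. norm (h (axis k 1)))"
  have K0: "K \<ge> 0" unfolding K_def by (simp add: sum_nonneg)
  have "norm (f x) \<le> K * norm x" if "x \<in> L" for x
  proof -
    have "h x = h (\<Sum>k\<in>UNIV. x $ k *s axis k 1)" by (simp add: basis_expansion)
    also have "\<dots> = (\<Sum>k\<in>UNIV. x $ k * h (axis k 1))" by (simp add: h.sum h.scale)
    finally have hx: "h x = (\<Sum>k\<in>UNIV. x $ k * h (axis k 1))" .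
    have "norm (h x) \<le> (\<Sum>k\<in>UNIV. norm (x $ k * h (axis k 1)))" unfolding hx by (rule norm_sum)
    also have "\<dots> \<le> (\<Sum>k\<in>UNIV. norm x * norm (h (axis k 1)))"
    proof (rule sum_mono)
      fix k :: 'r
      have "norm (x $ k) * norm (h (axis k 1)) \<le> norm x * norm (h (axis k 1))"
        using Finite_Cartesian_Product.norm_nth_le by (rule mult_right_mono) simp
      then show "norm (x $ k * h (axis k 1)) \<le> norm x * norm (h (axis k 1))"
        by (simp add: norm_mult)
    qed
    also have "\<dots> = K * norm x" by (simp add: K_def sum_distrib_left mult.commute)
    finally show ?thesis using hf[OF that] by simp
  qed
  then show ?thesis using K0 by blast
qed


lemma eig_bound:
  fixes \<theta> :: "complex^'r::finite \<Rightarrow> complex^'m::finite^'m"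
  assumes L: "vec.subspace L" and rep: "is_lie_rep L br \<theta>"
  shows "\<exists>K\<ge>0. \<forall>g\<in>L. \<forall>r v. v \<noteq> 0 \<longrightarrow> \<theta> g *v v = r *s v \<longrightarrow> norm r \<le> K * norm g"
proof -
  have "\<exists>K\<ge>0. \<forall>g\<in>L. norm (\<theta> g $ a $ b) \<le> K * norm g" for a b
  proof (rule lin_on_bound[OF L])
    show "\<theta> (x + y) $ a $ b = \<theta> x $ a $ b + \<theta> y $ a $ b" if "x \<in> L" "y \<in> L" for x y
      using rep that by (simp add: is_lie_rep_def)
    show "\<theta> (c *s x) $ a $ b = c * \<theta> x $ a $ b" if "x \<in> L" for c x
      using rep that by (simp add: is_lie_rep_def mscale_def)
  qed
  then obtain Kf where Kf: "\<And>a b. Kf a b \<ge> 0" "\<And>a b g. g \<in> L \<Longrightarrow> norm (\<theta> g $ a $ b) \<le> Kf a b * norm g"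
    by metis
  define K where "K = (\<Sum>a\<in>UNIV. \<Sum>b\<in>UNIV. Kf a b)"
  have K0: "K \<ge> 0" unfolding K_def by (simp add: sum_nonneg Kf(1))
  have "norm r \<le> K * norm g" if g: "g \<in> L" and v: "v \<noteq> 0" and ev: "\<theta> g *v v = r *s v" for g r v
  proof -
    define M where "M = Max (range (\<lambda>a. norm (v $ a)))"
    have "M \<in> range (\<lambda>a. norm (v $ a))" unfolding M_def by (rule Max_in) auto
    then obtain a0 where a0: "norm (v $ a0) = M" by auto
    have Mge: "norm (v $ a) \<le> M" for a unfolding M_def by (rule Max_ge) auto
    obtain a1 where "v $ a1 \<noteq> 0" using v by (auto simp: vec_eq_iff)
    then have "norm (v $ a1) > 0" by simp
    then have Mpos: "M > 0" using Mge[of a1] by linarith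
    have "norm r * M = norm ((\<theta> g *v v) $ a0)" using ev a0 by (simp add: norm_mult)
    also have "\<dots> = norm (\<Sum>b\<in>UNIV. \<theta> g $ a0 $ b * v $ b)" by (simp add: matrix_vector_mult_def)
    also have "\<dots> \<le> (\<Sum>b\<in>UNIV. norm (\<theta> g $ a0 $ b * v $ b))" by (rule norm_sum)
    also have "\<dots> \<le> (\<Sum>b\<in>UNIV. (Kf a0 b * norm g) * M)"
    proof (rule sum_mono)
      fix b
      show "norm (\<theta> g $ a0 $ b * v $ b) \<le> Kf a0 b * norm g * M"
        unfolding norm_mult by (rule mult_mono[OF Kf(2)[OF g] Mge]) (auto simp: Kf(1))
    qed
    also have "\<dots> = (\<Sum>b\<in>UNIV. Kf a0 b) * norm g * M" by (simp add: sum_distrib_right)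
    also have "\<dots> \<le> K * norm g * M"
    proof -
      have "(\<Sum>b\<in>UNIV. Kf a0 b) \<le> K" unfolding K_def
        using member_le_sum[of a0 UNIV "\<lambda>a. \<Sum>b\<in>UNIV. Kf a b"] by (simp add: sum_nonneg Kf(1))
      then show ?thesis using Mpos by (intro mult_right_mono) auto
    qed
    finally have "norm r * M \<le> K * norm g * M" .
    then show ?thesis using Mpos by simp
  qed
  then show ?thesis using K0 by blast
qed

lemma kernel_of_det0:
  fixes T :: "'a::field^'m::finite^'m"
  assumes "det T = 0"
  shows "\<exists>v. v \<noteq> 0 \<and> T *v v = 0"
proof (rule ccontr)
  assume "\<not> ?thesis"
  then have "\<forall>x. T *v x = 0 \<longrightarrow> x = 0" by blast
  then have "\<exists>B. B ** T = mat 1" by (simp add: matrix_left_invertible_ker)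
  then obtain B where "B ** T = mat 1" by blast
  then have "T ** B = mat 1" by (simp add: matrix_left_right_inverse)
  with \<open>B ** T = mat 1\<close> have "invertible T" unfolding invertible_def by blast
  then show False using assms by (simp add: invertible_det_nz)
qed

lemma det_nz_inj:
  fixes T :: "'a::field^'m::finite^'m"
  assumes "det T \<noteq> 0" "T *v v = 0"
  shows "v = 0"
proof -
  have "invertible T" using assms(1) by (simp add: invertible_det_nz)
  then obtain B where "B ** T = mat 1" unfolding invertible_def by blast
  then have "\<exists>B. B ** T = mat 1" by blast
  then show ?thesis using assms(2) by (simp add: matrix_left_invertible_ker)
qed


section \<open>cdga facts\<close>

lemma Agr_Cs: "Agr deg p = Cs deg p"
proof
  show "Agr deg p \<subseteq> Cs deg p"
    unfolding Agr_def
    by (rule vec.span_minimal) (use subspace_Cs[of deg p] in \<open>auto simp: Cs_def axis_def\<close>)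
  show "Cs deg p \<subseteq> Agr deg p"
  proof
    fix x assume x: "x \<in> Cs deg p"
    have "x = (\<Sum>j\<in>UNIV. x $ j *s axis j 1)" by (simp add: basis_expansion)
    also have "\<dots> \<in> Agr deg p"
      unfolding Agr_def
    proof (rule vec.span_sum)
      fix j :: 'a
      show "x $ j *s axis j 1 \<in> vec.span {axis j 1 |j. deg j = p}"
      proof (cases "deg j = p")
        case True then show ?thesis by (intro vec.span_scale vec.span_base) auto
      next
        case False then have "x $ j = 0" using x by (auto simp: Cs_def)
        then show ?thesis by (simp add: vec.span_zero)
      qed
    qed
    finally show "x \<in> Agr deg p" .
  qed
qed

context
  fixes deg :: "'n::finite \<Rightarrow> nat" and one mul and d :: "complex^'n \<Rightarrow> complex^'n"
  assumes cdga: "is_cdga deg one mul d"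
begin

lemma ld: "Vector_Spaces.linear (*s) (*s) d"
  using cdga unfolding is_cdga_def by blast

lemma lmr: "Vector_Spaces.linear (*s) (*s) (mul a)"
  using cdga unfolding is_cdga_def by blast

lemma lml: "Vector_Spaces.linear (*s) (*s) (\<lambda>a. mul a b)"
  using cdga unfolding is_cdga_def by blast

lemma massoc: "mul (mul a b) c = mul a (mul b c)"
  using cdga unfolding is_cdga_def by blast

lemma mdeg: "a \<in> Cs deg p \<Longrightarrow> b \<in> Cs deg q \<Longrightarrow> mul a b \<in> Cs deg (p + q)"
  using cdga unfolding is_cdga_def Agr_Cs by blast

lemma mcomm: "a \<in> Cs deg p \<Longrightarrow> b \<in> Cs deg q \<Longrightarrow> mul a b = ((-1) ^ (p * q)) *s mul b a"
  using cdga unfolding is_cdga_def Agr_Cs by blast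

lemma ddeg: "a \<in> Cs deg p \<Longrightarrow> d a \<in> Cs deg (Suc p)"
  using cdga unfolding is_cdga_def Agr_Cs by blast

lemma dd: "d (d a) = 0"
  using cdga unfolding is_cdga_def by blast

lemma leib: "a \<in> Cs deg p \<Longrightarrow> d (mul a b) = mul (d a) b + ((-1) ^ p) *s mul a (d b)"
  using cdga unfolding is_cdga_def Agr_Cs by blast

lemma mul0l: "mul 0 b = 0"
  using vec.linear_0[OF lml] .

lemma mul0r: "mul a 0 = 0"
  using vec.linear_0[OF lmr] .

lemma mul_scale_l: "mul (k *s a) b = k *s mul a b"
  using vec.linear_scale[OF lml] .

lemma mul_scale_r: "mul a (k *s b) = k *s mul a b"
  using vec.linear_scale[OF lmr] .

lemma mul_add_r: "mul a (b + c) = mul a b + mul a c"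
  using vec.linear_add[OF lmr] .

lemma mul_add_l: "mul (a + b) c = mul a c + mul b c"
  using vec.linear_add[OF lml] .

lemma d_add: "d (a + b) = d a + d b"
  using vec.linear_add[OF ld] .

lemma d_scale: "d (k *s a) = k *s d a"
  using vec.linear_scale[OF ld] .

lemma eta_sq:
  assumes "\<eta> \<in> Cs deg 1" shows "mul \<eta> \<eta> = 0"
proof -
  have e: "mul \<eta> \<eta> = (-1) *s mul \<eta> \<eta>" using mcomm[OF assms assms] by simp
  have "mul \<eta> \<eta> $ i = 0" for i
  proof -
    have "mul \<eta> \<eta> $ i = - (mul \<eta> \<eta> $ i)" by (subst e) simp
    then show ?thesis by simp
  qed
  then show ?thesis by (simp add: vec_eq_iff)
qed

lemma eta_sq2:
  assumes "\<eta> \<in> Cs deg 1" shows "mul \<eta> (mul \<eta> c) = 0"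
  using massoc[of \<eta> \<eta> c, symmetric] eta_sq[OF assms] mul0l by simp

lemma leib_eta:
  assumes "\<eta> \<in> Cs deg 1" "d \<eta> = 0" shows "d (mul \<eta> c) = - mul \<eta> (d c)"
  using leib[OF assms(1), of c] assms(2) mul0l by (simp add: vec_eq_iff)


lemma ip_vT: "ip (u v* T) w = ip u (T *v w)"
  by (simp add: ip_def vector_matrix_mult_def matrix_vector_mult_def sum_distrib_left
      sum_distrib_right algebra_simps) (rule sum.swap)

lemma ip_axis: "ip (axis a k) v = k * v $ a"
proof -
  have "ip (axis a k) v = (\<Sum>b\<in>UNIV. if b = a then k * v $ a else 0)"
    unfolding ip_def by (rule sum.cong) (auto simp: axis_def)
  then show ?thesis by simp
qed

lemma ip_comm: "ip u w = ip w u"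
  by (simp add: ip_def mult.commute)

lemma piu_add: "piu u (x + y) = piu u x + piu u y"
  by (simp add: vec_eq_iff piu_nth algebra_simps sum.distrib)

lemma piu_zero: "piu 0 x = 0"
  by (simp add: vec_eq_iff piu_nth)

lemma ip_add: "ip u (a + b) = ip u a + ip u b"
  by (simp add: ip_def algebra_simps sum.distrib)

lemma ip_scale: "ip u (c *s b) = c * ip u b"
  by (simp add: ip_def algebra_simps sum_distrib_left)

lemma ip_zero: "ip u 0 = 0"
  by (simp add: ip_def)

lemma slice_add: "slice (x + y) j = slice x j + slice y j"
  by (simp add: vec_eq_iff)

lemma slice_diff: "slice (x - y) j = slice x j - slice y j"
  by (simp add: vec_eq_iff)

lemma slice_tens: "slice (tens a b) j = a $ j *s b"
  by (simp add: vec_eq_iff)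

lemma piu_diff: "piu u (x - y) = piu u x - piu u y"
  by (simp add: vec_eq_iff piu_nth algebra_simps sum_subtractf)

lemma piu_tens: "piu u (tens c w) = ip u w *s c"
  by (simp add: vec_eq_iff piu_nth ip_def sum_distrib_left algebra_simps)

lemma piu_lin: "Vector_Spaces.linear (*s) (*s) f \<Longrightarrow>
   f (piu u x) $ j = (\<Sum>a\<in>UNIV. u $ a * (\<Sum>l\<in>UNIV. x $ (l, a) * f (axis l 1) $ j))"
  by (simp add: lin_comp[of f "piu u x"] piu_nth sum_distrib_left sum_distrib_right algebra_simps) (rule sum.swap)

lemma piu_Dop: "piu u (Dop mul d \<eta> T x) = d (piu u x) + mul \<eta> (piu (u v* T) x)"
proof -
  have "piu u (Dop mul d \<eta> T x) $ j = (d (piu u x) + mul \<eta> (piu (u v* T) x)) $ j" for j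
  proof -
    have A: "mul \<eta> (piu (u v* T) x) $ j = (\<Sum>b\<in>UNIV. \<Sum>a\<in>UNIV. u $ a * T $ a $ b *
         (\<Sum>l\<in>UNIV. x $ (l, b) * mul \<eta> (axis l 1) $ j))"
      by (simp add: piu_lin[OF lmr] vector_matrix_mult_def sum_distrib_right)
    have B: "(\<Sum>a\<in>UNIV. u $ a * (\<Sum>l\<in>UNIV. mul \<eta> (axis l 1) $ j * (\<Sum>b\<in>UNIV. T $ a $ b * x $ (l, b))))
       = (\<Sum>a\<in>UNIV. \<Sum>b\<in>UNIV. u $ a * T $ a $ b * (\<Sum>l\<in>UNIV. x $ (l, b) * mul \<eta> (axis l 1) $ j))"
      apply (rule sum.cong, rule refl)
      apply (simp add: sum_distrib_left sum_distrib_right algebra_simps)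
      apply (subst sum.swap) apply (simp add: algebra_simps)
      done
    have C: "(\<Sum>a\<in>UNIV. u $ a * (\<Sum>l\<in>UNIV. d (axis l 1) $ j * x $ (l, a)))
       = (\<Sum>a\<in>UNIV. u $ a * (\<Sum>l\<in>UNIV. x $ (l, a) * d (axis l 1) $ j))"
      by (simp add: mult.commute)
    have "piu u (Dop mul d \<eta> T x) $ j = (\<Sum>a\<in>UNIV. u $ a * (\<Sum>l\<in>UNIV. d (axis l 1) $ j * x $ (l, a)))
       + (\<Sum>a\<in>UNIV. u $ a * (\<Sum>l\<in>UNIV. mul \<eta> (axis l 1) $ j * (\<Sum>b\<in>UNIV. T $ a $ b * x $ (l, b))))"
      by (simp only: piu_nth Dop_nth distrib_left sum.distrib)
    also have "\<dots> = d (piu u x) $ j + mul \<eta> (piu (u v* T) x) $ j"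
      unfolding C B A piu_lin[OF ld] by (subst (2) sum.swap) (rule refl)
    finally show ?thesis by simp
  qed
  then show ?thesis by (simp add: vec_eq_iff)
qed

lemma Dop_tens': "Dop mul d \<eta> T (tens c w) = tens (d c) w + tens (mul \<eta> c) (T *v w)"
  by (rule Dop_tens[OF ld lmr])

lemma Dop_sq_tens:
  assumes "\<eta> \<in> Cs deg 1" "d \<eta> = 0"
  shows "Dop mul d \<eta> T (Dop mul d \<eta> T (tens c w)) = 0"
  unfolding Dop_tens' Dop_add
  by (simp add: Dop_tens' dd leib_eta[OF assms] eta_sq2[OF assms(1)] vec_eq_pair)

lemma Dop_sq:
  assumes "\<eta> \<in> Cs deg 1" "d \<eta> = 0"
  shows "Dop mul d \<eta> T (Dop mul d \<eta> T x) = 0"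
  apply (subst decomp[of x])
  apply (simp only: Dop_sum Dop_sq_tens[OF assms])
  apply simp
  done

lemma Cs2_tens: "c \<in> Cs deg p \<Longrightarrow> tens c w \<in> Cs (\<lambda>(j::'n, a::'m::finite). deg j) p"
  by (auto simp: Cs_def)

lemma Cs2_colA: "x \<in> Cs (\<lambda>(j::'n, a::'m::finite). deg j) p \<Longrightarrow> colA x a \<in> Cs deg p"
  by (auto simp: Cs_def)

lemma Cs2_piu: "x \<in> Cs (\<lambda>(j::'n, a::'m::finite). deg j) p \<Longrightarrow> piu u x \<in> Cs deg p"
  by (auto simp: Cs_def piu_nth)

lemma Dop_deg:
  assumes "\<eta> \<in> Cs deg 1" and x: "x \<in> Cs (\<lambda>(j::'n, a::'m::finite). deg j) p"
  shows "Dop mul d \<eta> (T::complex^'m^'m) x \<in> Cs (\<lambda>(j::'n, a::'m::finite). deg j) (Suc p)"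
proof -
  have "Dop mul d \<eta> T x = (\<Sum>a\<in>UNIV. tens (d (colA x a)) (axis a 1) + tens (mul \<eta> (colA x a)) (T *v axis a 1))"
    by (subst decomp[of x]) (simp only: Dop_sum Dop_tens')
  also have "\<dots> \<in> Cs (\<lambda>(j::'n, a::'m::finite). deg j) (Suc p)"
  proof (rule vec.subspace_sum[OF subspace_Cs])
    fix a
    have c: "colA x a \<in> Cs deg p" by (rule Cs2_colA[OF x])
    show "tens (d (colA x a)) (axis a 1) + tens (mul \<eta> (colA x a)) (T *v axis a 1)
        \<in> Cs (\<lambda>(j::'n, a::'m::finite). deg j) (Suc p)"
      using mdeg[OF assms(1) c] ddeg[OF c]
      by (intro vec.subspace_add[OF subspace_Cs] Cs2_tens) auto
  qed
  finally show ?thesis .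
qed

lemma tw1_linear: "Vector_Spaces.linear (*s) (*s) (twisted1 mul d \<zeta>)"
  unfolding Vector_Spaces.linear_iff twisted1_def using vec.vector_space_axioms
  by (simp add: d_add d_scale mul_add_r mul_scale_r algebra_simps)

lemma tw1_deg: "\<zeta> \<in> Cs deg 1 \<Longrightarrow> c \<in> Cs deg p \<Longrightarrow> twisted1 mul d \<zeta> c \<in> Cs deg (Suc p)"
  unfolding twisted1_def using mdeg ddeg
  by (metis plus_1_eq_Suc subspace_Cs vec.subspace_add)

lemma tw1_sq: "\<zeta> \<in> Cs deg 1 \<Longrightarrow> d \<zeta> = 0 \<Longrightarrow> twisted1 mul d \<zeta> (twisted1 mul d \<zeta> c) = 0"
  unfolding twisted1_def
  by (simp add: d_add mul_add_r dd leib_eta eta_sq2)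

lemma tw1_exact:
  assumes "\<zeta> \<in> Cs deg 1" "d \<zeta> = 0" "cohdim_gen deg (twisted1 mul d \<zeta>) i = 0"
  shows "exact_at deg (twisted1 mul d \<zeta>) i"
  by (rule cohdim0_exact[OF tw1_linear _ tw1_sq[OF assms(1,2)] assms(3)])
    (use tw1_deg[OF assms(1)] in \<open>metis Suc_diff_1\<close>)

lemma tw1_zero: "twisted1 mul d 0 = d"
  by (simp add: twisted1_def fun_eq_iff mul0l)

lemma Dop_cohdim_pos:
  assumes "\<eta> \<in> Cs deg 1" "d \<eta> = 0"
    and ne: "\<not> exact_at (\<lambda>(j::'n, a::'m::finite). deg j) (Dop mul d \<eta> (T::complex^'m^'m)) i"
  shows "cohdim_gen (\<lambda>(j::'n, a::'m::finite). deg j) (Dop mul d \<eta> T) i \<ge> 1"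
proof (rule ccontr)
  assume "\<not> ?thesis"
  then have c0: "cohdim_gen (\<lambda>(j::'n, a::'m::finite). deg j) (Dop mul d \<eta> T) i = 0" by simp
  have "exact_at (\<lambda>(j::'n, a::'m::finite). deg j) (Dop mul d \<eta> T) i"
    by (rule cohdim0_exact[OF Dop_linear _ Dop_sq[OF assms(1,2)] c0])
      (use Dop_deg[OF assms(1)] in \<open>metis Suc_diff_1\<close>)
  with ne show False by simp
qed

lemma exact_b:
  assumes eta: "\<eta> \<in> Cs deg 1" "d \<eta> = 0"
    and Tv: "T *v v = 0" "v \<noteq> 0" and uT: "u v* T = 0" "u \<noteq> 0"
    and ex: "exact_at (\<lambda>(j::'n, a::'m::finite). deg j) (Dop mul d \<eta> (T::complex^'m^'m)) i"
  shows "exact_at deg d i"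
  unfolding exact_at_def
proof (intro ballI impI)
  fix c assume c: "c \<in> Cs deg i" and dc: "d c = 0"
  obtain a0 where a0: "v $ a0 \<noteq> 0" using Tv(2) by (auto simp: vec_eq_iff)
  define \<phi> :: "complex^'m" where "\<phi> = axis a0 (1 / v $ a0)"
  have ipphi: "ip \<phi> v = 1" using a0 by (simp add: \<phi>_def ip_axis)
  obtain b0 where b0: "u $ b0 \<noteq> 0" using uT(2) by (auto simp: vec_eq_iff)
  define w :: "complex^'m" where "w = axis b0 (1 / u $ b0)"
  have ipw: "ip u w = 1" using b0 by (simp add: w_def ip_comm[of u] ip_axis)
  have ipTw: "ip u (T *v w) = 0" unfolding ip_vT[symmetric] uT by (simp add: ip_def)
  let ?D = "Dop mul d \<eta> T"
  let ?dg = "\<lambda>(j::'n, a::'m::finite). deg j"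
  have z1: "tens c v \<in> Cs ?dg i" by (rule Cs2_tens[OF c])
  have Dz1: "?D (tens c v) = 0" by (simp add: Dop_tens' dc Tv vec_eq_pair)
  show "if i = 0 then c = 0 else \<exists>y\<in>Cs deg (i - 1). d y = c"
  proof (cases "i = 0")
    case True
    then have "tens c v = 0" using ex z1 Dz1 unfolding exact_at_def by auto
    then have "c $ j * v $ a0 = 0" for j by (metis tens_nth zero_index)
    then have "c = 0" using a0 by (simp add: vec_eq_iff)
    then show ?thesis using True by simp
  next
    case False
    then obtain x where x: "x \<in> Cs ?dg (i - 1)" and Dx: "?D x = tens c v"
      using ex z1 Dz1 unfolding exact_at_def by force
    define y0 where "y0 = piu \<phi> x"
    define y where "y = piu (\<phi> v* T) x"
    have y0: "y0 \<in> Cs deg (i - 1)" unfolding y0_def by (rule Cs2_piu[OF x])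
    have "c = piu \<phi> (tens c v)" by (simp add: piu_tens ipphi)
    also have "\<dots> = d y0 + mul \<eta> y" by (simp add: Dx[symmetric] piu_Dop y0_def y_def)
    finally have cy: "c = d y0 + mul \<eta> y" .
    have etac: "mul \<eta> c = mul \<eta> (d y0)"
      by (subst cy) (simp add: mul_add_r eta_sq2[OF eta(1)])
    define z' where "z' = tens c w + tens (mul \<eta> y0) (T *v w)"
    have "mul \<eta> y0 \<in> Cs deg i" using mdeg[OF eta(1) y0] False by simp
    then have z': "z' \<in> Cs ?dg i" unfolding z'_def
      by (intro vec.subspace_add[OF subspace_Cs] Cs2_tens c)
    have Dz': "?D z' = 0"
      unfolding z'_def Dop_add Dop_tens'
      by (simp add: dc etac leib_eta[OF eta] eta_sq2[OF eta(1)] vec_eq_pair)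
    obtain x' where x': "x' \<in> Cs ?dg (i - 1)" and Dx': "?D x' = z'"
      using ex z' Dz' False unfolding exact_at_def by force
    have "c = piu u z'" by (simp add: z'_def piu_add piu_tens ipw ipTw)
    also have "\<dots> = d (piu u x')" by (simp add: Dx'[symmetric] piu_Dop uT piu_zero mul0r)
    finally show ?thesis using False Cs2_piu[OF x'] by auto
  qed
qed

lemma exact_a:
  assumes eta: "\<eta> \<in> Cs deg 1" "d \<eta> = 0"
    and eig: "\<And>r v. v \<noteq> 0 \<Longrightarrow> T *v v = r *s v \<Longrightarrow> exact_at deg (twisted1 mul d (r *s \<eta>)) i"
  shows "exact_at (\<lambda>(j::'n, a::'m::finite). deg j) (Dop mul d \<eta> (T::complex^'m^'m)) i"
proof -
  let ?D = "Dop mul d \<eta> T"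
  let ?dg = "\<lambda>(j::'n, a::'m::finite). deg j"
  have main: "\<And>W. vec.dim W = n \<Longrightarrow> vec.subspace W \<Longrightarrow> (\<forall>x\<in>W. T *v x \<in> W) \<Longrightarrow>
     z \<in> Cs ?dg i \<Longrightarrow> ?D z = 0 \<Longrightarrow> (\<forall>j. slice z j \<in> W) \<Longrightarrow>
     (if i = 0 then z = 0 else \<exists>x\<in>Cs ?dg (i - 1). (\<forall>j. slice x j \<in> W) \<and> ?D x = z)" for n z
  proof (induct n arbitrary: z rule: less_induct)
    case (less n W z)
    note W = less.prems(2) and inv = less.prems(3) and zC = less.prems(4) and Dz = less.prems(5)
      and zW = less.prems(6)
    show ?case
    proof (cases "W \<subseteq> {0}")
      case True
      then have "slice z j = 0" for j using zW by blast
      then have z0: "z = 0" by (simp add: vec_eq_pair) (metis slice_nth zero_index)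
      have "(0::complex^('n \<times> 'm)) \<in> Cs ?dg (i - 1)" by (simp add: Cs_def)
      moreover have "slice (0::complex^('n \<times> 'm)) j \<in> W" for j
        using vec.subspace_0[OF W] by (simp add: slice_def zero_vec_def)
      ultimately show ?thesis using z0 Dop_0[of mul d \<eta> T] by (auto intro!: bexI[of _ 0])
    next
      case False
      then obtain x0 where x0W: "x0 \<in> W" and x0: "x0 \<noteq> 0" by blast
      obtain r y where yW: "y \<in> W" and y0: "y \<noteq> 0" and Ty: "T *v y = r *s y"
        using eig_in_subspace[OF W _ x0W x0] inv by blast
      obtain u w0 where w0W: "w0 \<in> W" and uw0: "ip u w0 = 1"
        and uT: "\<forall>s\<in>W. ip u (T *v s) = r * ip u s"
        using hyperplane[OF W _ yW y0 Ty] inv by blast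
      have exr: "exact_at deg (twisted1 mul d (r *s \<eta>)) i" by (rule eig[OF y0 Ty])
      define W' where "W' = {s \<in> W. ip u s = 0}"
      have W's: "vec.subspace W'"
        using W unfolding W'_def vec.subspace_def by (auto simp: ip_add ip_scale ip_zero)
      have W'inv: "\<forall>x\<in>W'. T *v x \<in> W'" using inv uT by (auto simp: W'_def)
      have W'sub: "W' \<subset> W"
      proof
        show "W' \<subseteq> W" by (auto simp: W'_def)
        show "W' \<noteq> W"
        proof
          assume "W' = W"
          then have "w0 \<in> W'" using w0W by simp
          then show False using uw0 by (simp add: W'_def)
        qed
      qed
      have dW': "vec.dim W' < n"
      proof -
        have sW': "vec.span W' = W'" by (simp add: W's vec.span_eq_iff)
        have sW: "vec.span W = W" by (simp add: W vec.span_eq_iff)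
        have "vec.span W' \<subset> vec.span W" unfolding sW' sW by (rule W'sub)
        then show ?thesis using less.prems(1) by (metis vec.dim_psubset)
      qed
      define c where "c = piu u z"
      have cC: "c \<in> Cs deg i" unfolding c_def by (rule Cs2_piu[OF zC])
      have puT: "piu (u v* T) z = r *s c"
        using uT zW by (simp add: vec_eq_iff c_def piu_def ip_vT)
      have tc: "twisted1 mul d (r *s \<eta>) c = 0"
      proof -
        have "0 = piu u (?D z)" using Dz by (simp add: vec_eq_iff piu_nth)
        also have "\<dots> = d c + mul \<eta> (r *s c)" by (simp add: piu_Dop c_def[symmetric] puT)
        finally show ?thesis by (simp add: twisted1_def mul_scale_l mul_scale_r)
      qed
      show ?thesis
      proof (cases "i = 0")
        case True
        then have c0: "c = 0" using exr cC tc unfolding exact_at_def by auto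
        have "\<forall>j. slice z j \<in> W'" using zW c0 by (auto simp: W'_def c_def piu_def vec_eq_iff)
        then have "z = 0" using less.hyps[OF dW' refl W's W'inv zC Dz] True by simp
        then show ?thesis using True by simp
      next
        case False
        then obtain y' where y'C: "y' \<in> Cs deg (i - 1)" and ty': "twisted1 mul d (r *s \<eta>) y' = c"
          using exr cC tc unfolding exact_at_def by force
        define t where "t = tens y' w0"
        have tC: "t \<in> Cs ?dg (i - 1)" unfolding t_def by (rule Cs2_tens[OF y'C])
        have tW: "slice t j \<in> W" for j
          unfolding t_def slice_tens by (rule vec.subspace_scale[OF W w0W])
        have Dt: "?D t = tens (d y') w0 + tens (mul \<eta> y') (T *v w0)"
          unfolding t_def by (rule Dop_tens')
        have Tw0: "ip u (T *v w0) = r" using uT w0W uw0 by simp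
        have puDt: "piu u (?D t) = c"
          unfolding Dt piu_add piu_tens uw0 Tw0 ty'[symmetric]
          by (simp add: twisted1_def mul_scale_l)
        define z' where "z' = z - ?D t"
        have DtC: "?D t \<in> Cs ?dg i" using Dop_deg[OF eta(1) tC] False by simp
        have z'C: "z' \<in> Cs ?dg i"
          unfolding z'_def by (rule vec.subspace_diff[OF subspace_Cs zC DtC])
        have Dz': "?D z' = 0"
          unfolding z'_def Dop_diff Dz Dop_sq[OF eta] by simp
        have DtW: "slice (?D t) j \<in> W" for j
          unfolding Dt slice_add slice_tens
          by (intro vec.subspace_add[OF W] vec.subspace_scale[OF W] w0W inv[rule_format])
        have puz': "piu u z' = 0" unfolding z'_def piu_diff puDt c_def by simp
        have z'W: "\<forall>j. slice z' j \<in> W'"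
        proof
          fix j
          have "slice z' j \<in> W" unfolding z'_def slice_diff
            using zW DtW vec.subspace_diff[OF W] by blast
          moreover have "ip u (slice z' j) = 0" using puz' by (simp add: piu_def vec_eq_iff)
          ultimately show "slice z' j \<in> W'" by (simp add: W'_def)
        qed
        obtain x'' where x''C: "x'' \<in> Cs ?dg (i - 1)" and x''W: "\<forall>j. slice x'' j \<in> W'"
          and Dx'': "?D x'' = z'"
          using less.hyps[OF dW' refl W's W'inv z'C Dz' z'W] False by auto
        have "t + x'' \<in> Cs ?dg (i - 1)" by (rule vec.subspace_add[OF subspace_Cs tC x''C])
        moreover have "\<forall>j. slice (t + x'') j \<in> W"
          using tW x''W W'sub vec.subspace_add[OF W] unfolding slice_add by blast
        moreover have "?D (t + x'') = z" unfolding Dop_add Dx'' z'_def by simp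
        ultimately show ?thesis using False by (simp only: if_False) blast
      qed
    qed
  qed
  show ?thesis unfolding exact_at_def
  proof (intro ballI impI)
    fix z assume "z \<in> Cs ?dg i" "?D z = 0"
    then show "if i = 0 then z = 0 else \<exists>y\<in>Cs ?dg (i - 1). ?D y = z"
      using main[OF refl vec.subspace_UNIV, of z] by auto
  qed
qed

lemma twisted_eq:
  assumes thscale: "\<And>c. \<theta> (c *s g) = mscale c (\<theta> g)"
  shows "twisted mul d \<theta> (tens \<eta> g) = Dop mul d \<eta> (\<theta> g)"
proof
  fix x
  have sl: "slice (tens \<eta> g) j = \<eta> $ j *s g" for j by (rule slice_tens)
  have mv: "\<theta> (\<eta> $ j *s g) *v v = \<eta> $ j *s (\<theta> g *v v)" for j v
    by (simp add: thscale mscale_def matrix_vector_mult_def vec_eq_iff sum_distrib_left algebra_simps)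
  have "twisted mul d \<theta> (tens \<eta> g) x $ (p, a) = Dop mul d \<eta> (\<theta> g) x $ (p, a)" for p a
  proof -
    have "(\<Sum>j\<in>UNIV. \<Sum>l\<in>UNIV. tens (mul (axis j 1) (axis l 1)) (\<eta> $ j *s (\<theta> g *v slice x l))) $ (p, a)
        = (\<Sum>l\<in>UNIV. tens (mul \<eta> (axis l 1)) (\<theta> g *v slice x l)) $ (p, a)"
    proof -
      have "(\<Sum>j\<in>UNIV. \<Sum>l\<in>UNIV. tens (mul (axis j 1) (axis l 1)) (\<eta> $ j *s (\<theta> g *v slice x l))) $ (p, a)
          = (\<Sum>j\<in>UNIV. \<Sum>l\<in>UNIV. mul (axis j 1) (axis l 1) $ p * (\<eta> $ j * (\<theta> g *v slice x l) $ a))"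
        by (simp add: sum_component)
      also have "\<dots> = (\<Sum>l\<in>UNIV. \<Sum>j\<in>UNIV. mul (axis j 1) (axis l 1) $ p * (\<eta> $ j * (\<theta> g *v slice x l) $ a))"
        by (rule sum.swap)
      also have "\<dots> = (\<Sum>l\<in>UNIV. mul \<eta> (axis l 1) $ p * (\<theta> g *v slice x l) $ a)"
        by (simp add: lin_comp[OF lml, of \<eta>] sum_distrib_left sum_distrib_right algebra_simps)
      also have "\<dots> = (\<Sum>l\<in>UNIV. tens (mul \<eta> (axis l 1)) (\<theta> g *v slice x l)) $ (p, a)"
        by (simp add: sum_component)
      finally show ?thesis .
    qed
    then show ?thesis by (simp add: twisted_def Dop_def sl mv)
  qed
  then show "twisted mul d \<theta> (tens \<eta> g) x = Dop mul d \<eta> (\<theta> g) x" by (simp add: vec_eq_pair)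
qed

lemma tens_flat:
  assumes eta: "\<eta> \<in> Cs deg 1" "d \<eta> = 0" and gL: "g \<in> L" and lie: "is_lie_algebra L br"
  shows "tens \<eta> g \<in> flat deg mul d L br"
proof -
  have L: "vec.subspace L" using lie by (simp add: is_lie_algebra_def)
  have brs: "br (c *s x) y = c *s br x y" "br x (c *s y) = c *s br x y" if "x \<in> L" "y \<in> L" for c x y
    using lie that by (auto simp: is_lie_algebra_def)
  have brgg: "br g g = 0" using lie gL by (simp add: is_lie_algebra_def)
  have A1: "tens \<eta> g \<in> A1g deg L"
    using eta(1) vec.subspace_scale[OF L gL] by (auto simp: Cs_def A1g_def slice_tens)
  have s1: "(\<Sum>j\<in>UNIV. tens (d (axis j 1)) (slice (tens \<eta> g) j)) = 0"
  proof -
    have "(\<Sum>j\<in>UNIV. tens (d (axis j 1)) (slice (tens \<eta> g) j)) $ (p, a) = d \<eta> $ p * g $ a" for p a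
      by (simp add: sum_component slice_tens lin_comp[OF ld, of \<eta>] sum_distrib_left sum_distrib_right algebra_simps)
    then show ?thesis using eta(2) by (simp add: vec_eq_pair)
  qed
  have s2: "br (slice (tens \<eta> g) j) (slice (tens \<eta> g) l) = 0" for j l
    unfolding slice_tens using brs(1)[OF gL vec.subspace_scale[OF L gL]] brs(2)[OF gL gL] brgg
    by simp
  have tz: "tens a (0::complex^'r) = 0" for a :: "complex^'n" by (simp add: vec_eq_pair)
  show ?thesis unfolding flat_def using A1 s1 s2 by (simp add: tz)
qed

end


theorem theorem2p4:
  fixes deg :: "'n::finite \<Rightarrow> nat"
    and one :: "complex^'n"
    and mul :: "complex^'n \<Rightarrow> complex^'n \<Rightarrow> complex^'n"
    and d :: "complex^'n \<Rightarrow> complex^'n"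
    and i :: nat
    and L :: "(complex^'r::finite) set"
    and br :: "complex^'r \<Rightarrow> complex^'r \<Rightarrow> complex^'r"
    and \<theta> :: "complex^'r \<Rightarrow> complex^'m::finite^'m"
  assumes "is_cdga deg one mul d"
    and "connected_cdga deg one"
    and "0 \<in> res1 deg mul d i 1"
    and "\<exists>e>0. res1 deg mul d i 1 \<inter> ball 0 e \<subseteq> {0}"
    and "is_lie_algebra L br"
    and "is_lie_rep L br \<theta>"
  shows "same_germ0 (Pi_set deg d L \<theta>) (res deg mul d L br \<theta> i 1 \<inter> flat1 deg d L)"
proof -
  note cd = assms(1)
  have L: "vec.subspace L" using assms(5) by (simp add: is_lie_algebra_def)
  obtain e0 where e0: "e0 > 0" and res0: "res1 deg mul d i 1 \<inter> ball 0 e0 \<subseteq> {0}"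
    using assms(4) by blast
  obtain K where K0: "K \<ge> 0"
    and Kb: "\<And>g r v. g \<in> L \<Longrightarrow> v \<noteq> 0 \<Longrightarrow> \<theta> g *v v = r *s v \<Longrightarrow> norm r \<le> K * norm g"
    using eig_bound[OF L assms(6)] by blast
  have thscale: "\<theta> (c *s g) = mscale c (\<theta> g)" if "g \<in> L" for c g
    using assms(6) that by (simp add: is_lie_rep_def)
  have tw: "twisted mul d \<theta> (tens \<eta> g) = Dop mul d \<eta> (\<theta> g)" if "g \<in> L" for \<eta> g
    by (rule twisted_eq[OF cd thscale[OF that]])
  have H0: "\<not> exact_at deg d i"
  proof
    assume "exact_at deg d i"
    then have "cohdim_gen deg d i = 0" by (rule exact_cohdim0[OF ld[OF cd]])
    moreover have "cohdim_gen deg (twisted1 mul d 0) i \<ge> 1" using assms(3) by (simp add: res1_def)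
    ultimately show False by (simp add: tw1_zero[OF cd])
  qed
  have th0: "\<theta> 0 = 0"
  proof -
    have "\<theta> (0 + 0) = \<theta> 0 + \<theta> 0" using assms(6) vec.subspace_0[OF L] unfolding is_lie_rep_def by blast
    then show ?thesis by simp
  qed
  have det0: "det (0::complex^'m^'m) = 0"
    by (rule det_zero_row(1)[of undefined]) (simp add: row_def vec_eq_iff)
  define e where "e = e0 / (K + 1)"
  have epos: "e > 0" unfolding e_def using e0 K0 by simp
  have sub1: "\<omega> \<in> res deg mul d L br \<theta> i 1 \<inter> flat1 deg d L" if om0: "\<omega> \<in> Pi_set deg d L \<theta>" for \<omega>
  proof -
    obtain \<eta> g where om: "\<omega> = tens \<eta> g" and etaA: "\<eta> \<in> Agr deg 1" and deta: "d \<eta> = 0"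
      and gL: "g \<in> L" and dt: "det (\<theta> g) = 0"
      using om0 unfolding Pi_set_def by blast
    have etaC: "\<eta> \<in> Cs deg 1" using etaA by (simp add: Agr_Cs)
    obtain v where v: "v \<noteq> 0" "\<theta> g *v v = 0" using kernel_of_det0[OF dt] by blast
    obtain u where u: "u \<noteq> 0" "transpose (\<theta> g) *v u = 0"
      using kernel_of_det0[of "transpose (\<theta> g)"] dt by (auto simp: det_transpose)
    have uT: "u v* \<theta> g = 0" using u(2) by (simp add: transpose_matrix_vector)
    have ne: "\<not> exact_at (\<lambda>(j::'n, a::'m). deg j) (Dop mul d \<eta> (\<theta> g)) i"
      using exact_b[OF cd etaC deta v(2) v(1) uT u(1)] H0 by blast
    have "cohdim_gen (\<lambda>(j::'n, a::'m). deg j) (twisted mul d \<theta> \<omega>) i \<ge> 1"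
      unfolding om tw[OF gL] by (rule Dop_cohdim_pos[OF cd etaC deta ne])
    moreover have "\<omega> \<in> flat deg mul d L br"
      unfolding om by (rule tens_flat[OF cd etaC deta gL assms(5)])
    moreover have "\<omega> \<in> flat1 deg d L" unfolding flat1_def om using etaA deta gL by blast
    ultimately show ?thesis by (simp add: res_def)
  qed
  have sub2: "\<omega> \<in> Pi_set deg d L \<theta>"
    if om1: "\<omega> \<in> res deg mul d L br \<theta> i 1" and om2: "\<omega> \<in> flat1 deg d L" and omb: "norm \<omega> < e" for \<omega>
  proof -
    obtain \<eta> g where om: "\<omega> = tens \<eta> g" and etaA: "\<eta> \<in> Agr deg 1" and deta: "d \<eta> = 0"
      and gL: "g \<in> L"
      using om2 unfolding flat1_def by blast
    have etaC: "\<eta> \<in> Cs deg 1" using etaA by (simp add: Agr_Cs)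
    show ?thesis
    proof (cases "det (\<theta> g) = 0")
      case True
      then show ?thesis unfolding Pi_set_def om using etaA deta gL by blast
    next
      case dt: False
      show ?thesis
      proof (cases "\<eta> = 0")
        case True
        have "\<omega> = tens 0 0" unfolding om True by (simp add: vec_eq_pair)
        moreover have "(0::complex^'n) \<in> Agr deg 1" by (simp add: Agr_Cs Cs_def)
        moreover have "d 0 = 0" by (rule vec.linear_0[OF ld[OF cd]])
        moreover have "(0::complex^'r) \<in> L" by (rule vec.subspace_0[OF L])
        ultimately show ?thesis unfolding Pi_set_def using th0 det0
          by (intro CollectI exI[of _ 0] exI[of _ "0::complex^'r"]) simp
      next
        case etane: False
        have eig: "exact_at deg (twisted1 mul d (r *s \<eta>)) i"
          if v: "v \<noteq> 0" and ev: "\<theta> g *v v = r *s v" for r v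
        proof -
          have rne: "r \<noteq> 0"
          proof
            assume "r = 0"
            then have "\<theta> g *v v = 0" using ev by simp
            then show False using det_nz_inj[OF dt] v by blast
          qed
          let ?z = "r *s \<eta>"
          have zC: "?z \<in> Cs deg 1" by (rule vec.subspace_scale[OF subspace_Cs etaC])
          have dz: "d ?z = 0" by (simp add: d_scale[OF cd] deta)
          have zne: "?z \<noteq> 0" using rne etane by (simp add: vec.scale_eq_0_iff)
          have "norm ?z = norm r * norm \<eta>" by (rule norm_scale_vec)
          also have "\<dots> \<le> K * norm g * norm \<eta>"
            using Kb[OF gL v ev] by (simp add: mult_right_mono)
          also have "\<dots> = K * norm \<omega>" by (simp add: om norm_tens mult.commute mult.left_commute)
          also have "\<dots> < e0"
          proof -
            have "K * norm \<omega> \<le> K * e" using omb K0 by (simp add: mult_left_mono)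
            also have "\<dots> < (K + 1) * e" using epos by simp
            also have "\<dots> = e0" unfolding e_def using K0 by simp
            finally show ?thesis .
          qed
          finally have zb: "?z \<in> ball 0 e0" by simp
          have "?z \<notin> res1 deg mul d i 1" using res0 zb zne by blast
          then have "\<not> cohdim_gen deg (twisted1 mul d ?z) i \<ge> 1"
            using zC dz by (simp add: res1_def Agr_Cs)
          then have "cohdim_gen deg (twisted1 mul d ?z) i = 0" by simp
          then show ?thesis by (rule tw1_exact[OF cd zC dz])
        qed
        have ex: "exact_at (\<lambda>(j::'n, a::'m). deg j) (Dop mul d \<eta> (\<theta> g)) i"
          by (rule exact_a[OF cd etaC deta eig])
        have "cohdim_gen (\<lambda>(j::'n, a::'m). deg j) (Dop mul d \<eta> (\<theta> g)) i = 0"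
          by (rule exact_cohdim0[OF Dop_linear ex])
        moreover have "cohdim_gen (\<lambda>(j::'n, a::'m). deg j) (twisted mul d \<theta> \<omega>) i \<ge> 1"
          using om1 by (simp add: res_def)
        ultimately have False unfolding om tw[OF gL] by simp
        then show ?thesis ..
      qed
    qed
  qed
  show ?thesis unfolding same_germ0_def
  proof (intro exI[of _ e] conjI epos)
    show "Pi_set deg d L \<theta> \<inter> ball 0 e = res deg mul d L br \<theta> i 1 \<inter> flat1 deg d L \<inter> ball 0 e"
      using sub1 sub2 by (auto simp: dist_norm)
  qed
qed

end
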